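(* Let $\mathcal{G}\subset\mathcal{S}$ and let $\mathcal{G}_H^0$ be its harmonic analogue. Then: (i) $\mathcal{G}_H^0\subset\mathcal{SS}_H^0$; (ii) if $f\in\mathcal{S}\cap\mathcal{G}_H^0$, then $f\in\mathcal{G}$; (iii) if $f=h+\bar g\in\mathcal{G}_H^0$, then $f_\lambda=h+\lambda\bar g\in\mathcal{G}_H^0$ for each $\lambda\in\mathbb{C}$ with $|\lambda|=1$; (iv) if $\mathcal{J}\subset\mathcal{G}$, then $\mathcal{J}_H^0\subset\mathcal{G}_H^0$, where $\mathcal{J}_H^0$ is the harmonic analogue of $\mathcal{J}$.
   Context: $\mathbb{D}=\{z\in\mathbb{C}:|z|<1\}$. $\mathcal{S}$ is the class of analytic univalent functions $f$ in $\mathbb{D}$ with $f(0)=0$, $f'(0)=1$. $\mathcal{H}$ is the class of complex-valued harmonic $f$ in $\mathbb{D}$ with $f(0)=0$, $f_z(0)=1$, $f_{\bar z}(0)=0$; such $f$ are written $f=h+\bar g$ with $h,g$ analytic. $\mathcal{S}_H^0\subset\mathcal{H}$ consists of the univalent sense-preserving ones ($|g'|<|h'|$ in $\mathbb{D}$). For $\mathcal{G}\subset\mathcal{S}$, its harmonic analogue $\mathcal{G}_H^0$ is the class of harmonic functions $f=h+\bar g$ ($h,g$ analytic in $\mathbb{D}$) such that $h+\epsilon g\in\mathcal{G}$ for every $\epsilon\in\mathbb{C}$ with $|\epsilon|=1$. A sense-preserving harmonic map $f=h+\bar g$ is stable univalent if $h+\lambda\bar g$ is univalent in $\mathbb{D}$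 for every $|\lambda|=1$; $\mathcal{SS}_H^0$ is the class of stable univalent functions in $\mathcal{S}_H^0$. *)

theory Defs
  imports "HOL-Analysis.Analysis"
begin

text \<open>Functions on the unit disk are represented as total functions complex => complex
  that are extended by 0 outside the disk, so that a function on the disk is identified
  with exactly one HOL function.\<close>

definition unit_disk :: "complex set" where
  "unit_disk = ball 0 1"

definition on_disk :: "(complex \<Rightarrow> complex) \<Rightarrow> complex \<Rightarrow> complex" where
  "on_disk \<phi> = (\<lambda>z. if z \<in> unit_disk then \<phi> z else 0)"

definition class_S :: "(complex \<Rightarrow> complex) set" where
  "class_S = {f. f holomorphic_on unit_disk \<and> inj_on f unit_disk \<and> f 0 = 0 \<and>
                 deriv f 0 = 1 \<and> (\<forall>z. z \<notin> unit_disk \<longrightarrow> f z = 0)}"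

definition harm :: "(complex \<Rightarrow> complex) \<Rightarrow> (complex \<Rightarrow> complex) \<Rightarrow> complex \<Rightarrow> complex" where
  "harm h g = on_disk (\<lambda>z. h z + cnj (g z))"

text \<open>The class S_H^0: univalent sense-preserving harmonic f = h + conj g with
  f(0) = 0, f_z(0) = h'(0) = 1, f_{conj z}(0) = conj (g'(0)) = 0.\<close>
definition class_SH0 :: "(complex \<Rightarrow> complex) set" where
  "class_SH0 = {f. \<exists>h g. h holomorphic_on unit_disk \<and> g holomorphic_on unit_disk \<and>
      f = harm h g \<and> f 0 = 0 \<and> deriv h 0 = 1 \<and> deriv g 0 = 0 \<and>
      inj_on f unit_disk \<and> (\<forall>z\<in>unit_disk. norm (deriv g z) < norm (deriv h z))}"

definition class_SSH0 :: "(complex \<Rightarrow> complex) set" where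
  "class_SSH0 = {f \<in> class_SH0. \<exists>h g. h holomorphic_on unit_disk \<and> g holomorphic_on unit_disk \<and>
      f = harm h g \<and> (\<forall>z\<in>unit_disk. norm (deriv g z) < norm (deriv h z)) \<and>
      (\<forall>lam. norm lam = 1 \<longrightarrow> inj_on (\<lambda>z. h z + lam * cnj (g z)) unit_disk)}"

definition harmonic_analogue :: "(complex \<Rightarrow> complex) set \<Rightarrow> (complex \<Rightarrow> complex) set" where
  "harmonic_analogue G = {f. \<exists>h g. h holomorphic_on unit_disk \<and> g holomorphic_on unit_disk \<and>
      f = harm h g \<and> (\<forall>\<epsilon>. norm \<epsilon> = 1 \<longrightarrow> on_disk (\<lambda>z. h z + \<epsilon> * g z) \<in> G)}"

end

theory Submission
  imports Defs "HOL-Complex_Analysis.Complex_Analysis"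
begin

lemma disk_open: "open unit_disk" and disk_conn: "connected unit_disk" and disk0: "0 \<in> unit_disk"
  by (auto simp: unit_disk_def convex_connected)

lemma real_holo_const:
  assumes "p holomorphic_on unit_disk" "\<And>z. z \<in> unit_disk \<Longrightarrow> p z \<in> \<real>"
  shows "p constant_on unit_disk"
proof (rule ccontr)
  assume nc: "\<not> p constant_on unit_disk"
  have "open (p ` unit_disk)"
    using open_mapping_thm[OF assms(1) disk_open disk_conn disk_open subset_refl nc] .
  moreover have "p 0 \<in> p ` unit_disk" using disk0 by auto
  ultimately obtain e where e: "e > 0" "ball (p 0) e \<subseteq> p ` unit_disk"
    using openE by blast
  have "p 0 + \<i> * of_real (e/2) \<in> ball (p 0) e"
    using e by (simp add: dist_norm norm_mult)
  then obtain z where z: "z \<in> unit_disk" "p z = p 0 + \<i> * of_real (e/2)" using e by auto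
  have "Im (p z) = 0" using assms(2)[OF z(1)] complex_is_Real_iff by blast
  moreover have "Im (p 0) = 0" using assms(2)[OF disk0] complex_is_Real_iff by blast
  moreover have "Im (p z) = Im (p 0) + e/2" using z(2) by simp
  ultimately show False using e by simp
qed

lemma cnj_holo_const:
  assumes "a holomorphic_on unit_disk" "b holomorphic_on unit_disk"
    and "\<And>z. z \<in> unit_disk \<Longrightarrow> a z = cnj (b z)" "z \<in> unit_disk"
  shows "b z = b 0"
proof -
  have p: "(\<lambda>z. b z + a z) constant_on unit_disk"
    by (rule real_holo_const) (auto intro!: holomorphic_intros assms simp: complex_is_Real_iff assms(3))
  have q: "(\<lambda>z. \<i> * (b z - a z)) constant_on unit_disk"
    by (rule real_holo_const) (auto intro!: holomorphic_intros assms simp: complex_is_Real_iff assms(3))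
  have "b z + a z = b 0 + a 0" "\<i> * (b z - a z) = \<i> * (b 0 - a 0)"
    using p q assms(4) disk0 unfolding constant_on_def by metis+
  then have "b z + a z = b 0 + a 0" "b z - a z = b 0 - a 0" by simp_all
  then have "2 * b z = 2 * b 0" by (metis add_diff_cancel_left' diff_add_cancel mult_2 add_diff_eq)
  then show ?thesis by simp
qed

lemma on_disk_in: "z \<in> unit_disk \<Longrightarrow> on_disk F z = F z"
  by (simp add: on_disk_def)

lemma deriv_on_disk0: "deriv (on_disk F) 0 = deriv F 0"
proof (rule deriv_cong_ev)
  show "\<forall>\<^sub>F x in nhds 0. on_disk F x = F x"
    using disk_open disk0 by (auto intro: eventually_nhds_in_open eventually_mono simp: on_disk_in)
qed simp

lemma two_eq: "(a::complex) + b = c \<Longrightarrow> a - b = c \<Longrightarrow> a = c \<and> b = 0"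
  by (simp add: complex_eq_iff)

lemma extract_props:
  assumes GS: "G \<subseteq> class_S" and h: "h holomorphic_on unit_disk" and g: "g holomorphic_on unit_disk"
    and an: "\<forall>\<epsilon>. norm \<epsilon> = 1 \<longrightarrow> on_disk (\<lambda>z. h z + \<epsilon> * g z) \<in> G"
  shows "h 0 = 0" "g 0 = 0" "deriv h 0 = 1" "deriv g 0 = 0"
    "\<And>\<epsilon>. norm \<epsilon> = 1 \<Longrightarrow> inj_on (\<lambda>z. h z + \<epsilon> * g z) unit_disk"
    "\<And>\<epsilon> z. norm \<epsilon> = 1 \<Longrightarrow> z \<in> unit_disk \<Longrightarrow> deriv h z + \<epsilon> * deriv g z \<noteq> 0"
proof -
  have S: "on_disk (\<lambda>z. h z + \<epsilon> * g z) \<in> class_S" if "norm \<epsilon> = 1" for \<epsilon>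
    using an that GS by blast
  have v0: "h 0 + \<epsilon> * g 0 = 0" if "norm \<epsilon> = 1" for \<epsilon>
    using S[OF that] disk0 by (simp add: class_S_def on_disk_in)
  have dd: "deriv (\<lambda>z. h z + \<epsilon> * g z) z = deriv h z + \<epsilon> * deriv g z" if "z \<in> unit_disk" for \<epsilon> z
  proof -
    have "h field_differentiable at z" "g field_differentiable at z"
      using h g that disk_open holomorphic_on_imp_differentiable_at by blast+
    then have "((\<lambda>z. h z + \<epsilon> * g z) has_field_derivative deriv h z + \<epsilon> * deriv g z) (at z)"
      by (intro DERIV_add DERIV_cmult field_differentiable_derivI)
    then show ?thesis by (rule DERIV_imp_deriv)
  qed
  have d0: "deriv h 0 + \<epsilon> * deriv g 0 = 1" if "norm \<epsilon> = 1" for \<epsilon>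
    using S[OF that] dd[OF disk0, of \<epsilon>] deriv_on_disk0[of "\<lambda>z. h z + \<epsilon> * g z"] unfolding class_S_def by simp
  have a1: "h 0 + g 0 = 0" "h 0 - g 0 = 0" using v0[of 1] v0[of "-1"] by simp_all
  from two_eq[OF a1] show "h 0 = 0" "g 0 = 0" by simp_all
  have b1: "deriv h 0 + deriv g 0 = 1" "deriv h 0 - deriv g 0 = 1" using d0[of 1] d0[of "-1"] by simp_all
  from two_eq[OF b1] show "deriv h 0 = 1" "deriv g 0 = 0" by simp_all
  show inj: "inj_on (\<lambda>z. h z + \<epsilon> * g z) unit_disk" if "norm \<epsilon> = 1" for \<epsilon>
  proof -
    have "inj_on (on_disk (\<lambda>z. h z + \<epsilon> * g z)) unit_disk" using S[OF that] by (simp add: class_S_def)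
    moreover have "\<And>z. z \<in> unit_disk \<Longrightarrow> on_disk (\<lambda>z. h z + \<epsilon> * g z) z = h z + \<epsilon> * g z"
      by (rule on_disk_in)
    ultimately show ?thesis using inj_on_cong[of unit_disk "on_disk (\<lambda>z. h z + \<epsilon> * g z)" "\<lambda>z. h z + \<epsilon> * g z"] by simp
  qed
  show "deriv h z + \<epsilon> * deriv g z \<noteq> 0" if "norm \<epsilon> = 1" "z \<in> unit_disk" for \<epsilon> z
  proof -
    have hol: "(\<lambda>z. h z + \<epsilon> * g z) holomorphic_on unit_disk"
      using h g by (intro holomorphic_on_add holomorphic_on_mult holomorphic_on_const)
    have "deriv (\<lambda>z. h z + \<epsilon> * g z) z \<noteq> 0"
      by (rule holomorphic_injective_imp_regular[OF hol disk_open inj[OF that(1)] that(2)])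
    then show ?thesis using dd[OF that(2)] by simp
  qed
qed


lemma on_disk_cong: "(\<And>z. z \<in> unit_disk \<Longrightarrow> F z = H z) \<Longrightarrow> on_disk F = on_disk H"
  by (auto simp: on_disk_def)

lemma stab_inj:
  assumes inj: "\<And>\<epsilon>. norm \<epsilon> = 1 \<Longrightarrow> inj_on (\<lambda>z. h z + \<epsilon> * g z) S" and lam: "norm lam = 1"
  shows "inj_on (\<lambda>z. h z + lam * cnj (g z)) S"
proof (rule inj_onI)
  fix z1 z2 assume z: "z1 \<in> S" "z2 \<in> S" and eq: "h z1 + lam * cnj (g z1) = h z2 + lam * cnj (g z2)"
  define a where "a = h z1 - h z2"
  define b where "b = g z1 - g z2"
  have ab: "a = - lam * cnj b" using eq unfolding a_def b_def by (simp add: algebra_simps)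
  have nab: "norm a = norm b" using ab lam by (simp add: norm_mult)
  show "z1 = z2"
  proof (cases "b = 0")
    case True
    then have "a = 0" using ab by simp
    then have "h z1 + 1 * g z1 = h z2 + 1 * g z2" using True unfolding a_def b_def by simp
    then show ?thesis using inj[of 1] z by (auto dest: inj_onD)
  next
    case False
    define e where "e = - a / b"
    have ne: "norm e = 1" using False nab by (simp add: e_def norm_divide)
    have "a + e * b = 0" using False by (simp add: e_def)
    then have "h z1 + e * g z1 = h z2 + e * g z2" unfolding a_def b_def by (simp add: algebra_simps)
    then show ?thesis using inj[OF ne] z by (auto dest: inj_onD)
  qed
qed

lemma norm_lt:
  assumes h: "h holomorphic_on unit_disk" and g: "g holomorphic_on unit_disk"
    and d0: "deriv h 0 = 1" "deriv g 0 = 0"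
    and nz: "\<And>\<epsilon> z. norm \<epsilon> = 1 \<Longrightarrow> z \<in> unit_disk \<Longrightarrow> deriv h z + \<epsilon> * deriv g z \<noteq> 0"
  shows "\<forall>z\<in>unit_disk. norm (deriv g z) < norm (deriv h z)"
proof
  define \<psi> where "\<psi> = (\<lambda>z. norm (deriv h z) - norm (deriv g z))"
  have ne: "\<psi> z \<noteq> 0" if z: "z \<in> unit_disk" for z
  proof
    assume "\<psi> z = 0"
    then have eqn: "norm (deriv h z) = norm (deriv g z)" by (simp add: \<psi>_def)
    show False
    proof (cases "deriv g z = 0")
      case True
      then show False using eqn nz[of 1 z] z by simp
    next
      case False
      define e where "e = - deriv h z / deriv g z"
      have "norm e = 1" using False eqn by (simp add: e_def norm_divide)
      moreover have "deriv h z + e * deriv g z = 0" using False by (simp add: e_def)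
      ultimately show False using nz z by blast
    qed
  qed
  have cont: "continuous_on unit_disk \<psi>"
  proof -
    have "deriv h holomorphic_on unit_disk" "deriv g holomorphic_on unit_disk"
      using h g disk_open holomorphic_deriv by blast+
    then have "continuous_on unit_disk (deriv h)" "continuous_on unit_disk (deriv g)"
      using holomorphic_on_imp_continuous_on by blast+
    then show ?thesis unfolding \<psi>_def by (intro continuous_intros)
  qed
  have conn: "connected (\<psi> ` unit_disk)"
    using connected_continuous_image[OF cont disk_conn] .
  have one: "1 \<in> \<psi> ` unit_disk" using disk0 d0 by (force simp: \<psi>_def)
  fix z assume z: "z \<in> unit_disk"
  show "norm (deriv g z) < norm (deriv h z)"
  proof (rule ccontr)
    assume "\<not> ?thesis"
    then have "\<psi> z < 0" using ne[OF z] by (simp add: \<psi>_def)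
    then have m: "(0::real) \<in> {\<psi> z..1}" by simp
    have "{\<psi> z..1} \<subseteq> \<psi> ` unit_disk"
      using connected_contains_Icc[OF conn _ one] z by blast
    with m have "0 \<in> \<psi> ` unit_disk" by blast
    then obtain w where "w \<in> unit_disk" "\<psi> w = 0" by (metis imageE)
    then show False using ne by blast
  qed
qed


lemma part1:
  assumes GS: "G \<subseteq> class_S" and f: "f \<in> harmonic_analogue G"
  shows "f \<in> class_SSH0"
proof -
  obtain h g where h: "h holomorphic_on unit_disk" and g: "g holomorphic_on unit_disk"
    and fe: "f = harm h g" and an: "\<forall>\<epsilon>. norm \<epsilon> = 1 \<longrightarrow> on_disk (\<lambda>z. h z + \<epsilon> * g z) \<in> G"
    using f unfolding harmonic_analogue_def by blast
  note P = extract_props[OF GS h g an]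
  have stab: "inj_on (\<lambda>z. h z + lam * cnj (g z)) unit_disk" if "norm lam = 1" for lam
    by (rule stab_inj[OF P(5) that])
  have nl: "\<forall>z\<in>unit_disk. norm (deriv g z) < norm (deriv h z)"
    by (rule norm_lt[OF h g P(3) P(4) P(6)])
  have f0: "f 0 = 0" using disk0 P(1) P(2) by (simp add: fe harm_def on_disk_in)
  have "inj_on (\<lambda>z. h z + 1 * cnj (g z)) unit_disk" using stab[of 1] by simp
  then have injf: "inj_on f unit_disk"
    using inj_on_cong[of unit_disk f "\<lambda>z. h z + 1 * cnj (g z)"] by (simp add: fe harm_def on_disk_in)
  have "f \<in> class_SH0" unfolding class_SH0_def mem_Collect_eq
    by (intro exI[of _ h] exI[of _ g] conjI h g fe f0 P(3) P(4) injf nl)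
  then show ?thesis unfolding class_SSH0_def mem_Collect_eq
    by (intro conjI exI[of _ h] exI[of _ g] h g fe nl allI impI stab)
qed

lemma part2:
  assumes GS: "G \<subseteq> class_S" and fS: "f \<in> class_S" and f: "f \<in> harmonic_analogue G"
  shows "f \<in> G"
proof -
  obtain h g where h: "h holomorphic_on unit_disk" and g: "g holomorphic_on unit_disk"
    and fe: "f = harm h g" and an: "\<forall>\<epsilon>. norm \<epsilon> = 1 \<longrightarrow> on_disk (\<lambda>z. h z + \<epsilon> * g z) \<in> G"
    using f unfolding harmonic_analogue_def by blast
  note P = extract_props[OF GS h g an]
  have fh: "f holomorphic_on unit_disk" using fS by (simp add: class_S_def)
  have g0: "g z = 0" if z: "z \<in> unit_disk" for z
  proof -
    have "g z = g 0"
    proof (rule cnj_holo_const[of "\<lambda>z. f z - h z" g])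
      show "(\<lambda>z. f z - h z) holomorphic_on unit_disk" using fh h by (rule holomorphic_on_diff)
      show "\<And>w. w \<in> unit_disk \<Longrightarrow> f w - h w = cnj (g w)" by (simp add: fe harm_def on_disk_in)
    qed (use g z in auto)
    then show ?thesis using P(2) by simp
  qed
  have "on_disk (\<lambda>z. h z + 1 * g z) = f"
    unfolding fe harm_def by (rule on_disk_cong) (simp add: g0)
  moreover have "on_disk (\<lambda>z. h z + 1 * g z) \<in> G" using an[rule_format, of 1] by simp
  ultimately show ?thesis by simp
qed

lemma part3:
  assumes GS: "G \<subseteq> class_S" and h: "h holomorphic_on unit_disk" and g: "g holomorphic_on unit_disk"
    and h0: "h 0 = 0" and g0: "g 0 = 0" and hg: "harm h g \<in> harmonic_analogue G" and lam: "norm lam = 1"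
  shows "on_disk (\<lambda>z. h z + lam * cnj (g z)) \<in> harmonic_analogue G"
proof -
  obtain h1 g1 where h1: "h1 holomorphic_on unit_disk" and g1: "g1 holomorphic_on unit_disk"
    and fe: "harm h g = harm h1 g1" and an: "\<forall>\<epsilon>. norm \<epsilon> = 1 \<longrightarrow> on_disk (\<lambda>z. h1 z + \<epsilon> * g1 z) \<in> G"
    using hg unfolding harmonic_analogue_def by blast
  note P = extract_props[OF GS h1 g1 an]
  have eqz: "h z + cnj (g z) = h1 z + cnj (g1 z)" if "z \<in> unit_disk" for z
    using fun_cong[OF fe, of z] that by (simp add: harm_def on_disk_in)
  have geq: "g z = g1 z" if z: "z \<in> unit_disk" for z
  proof -
    have "g1 z - g z = g1 0 - g 0"
    proof (rule cnj_holo_const[of "\<lambda>z. h z - h1 z" "\<lambda>z. g1 z - g z"])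
      show "(\<lambda>z. h z - h1 z) holomorphic_on unit_disk" using h h1 by (rule holomorphic_on_diff)
      show "(\<lambda>z. g1 z - g z) holomorphic_on unit_disk" using g1 g by (rule holomorphic_on_diff)
      fix w assume w: "w \<in> unit_disk"
      have "h w + cnj (g w) = h1 w + cnj (g1 w)" by (rule eqz[OF w])
      then show "h w - h1 w = cnj (g1 w - g w)" by (simp add: algebra_simps)
    qed (use z in auto)
    then show ?thesis using P(2) g0 by simp
  qed
  have heq: "h z = h1 z" if z: "z \<in> unit_disk" for z
    using eqz[OF z] geq[OF z] by simp
  have g': "(\<lambda>z. cnj lam * g z) holomorphic_on unit_disk" using g by (intro holomorphic_intros)
  have e1: "harm h (\<lambda>z. cnj lam * g z) = on_disk (\<lambda>z. h z + lam * cnj (g z))"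
    unfolding harm_def by simp
  have e2: "on_disk (\<lambda>z. h z + \<epsilon> * (cnj lam * g z)) \<in> G" if "norm \<epsilon> = 1" for \<epsilon>
  proof -
    have "norm (\<epsilon> * cnj lam) = 1" using that lam by (simp add: norm_mult)
    then have "on_disk (\<lambda>z. h1 z + (\<epsilon> * cnj lam) * g1 z) \<in> G" using an by blast
    moreover have "on_disk (\<lambda>z. h1 z + (\<epsilon> * cnj lam) * g1 z) = on_disk (\<lambda>z. h z + \<epsilon> * (cnj lam * g z))"
      by (rule on_disk_cong) (simp add: heq geq)
    ultimately show ?thesis by simp
  qed
  show ?thesis unfolding harmonic_analogue_def mem_Collect_eq
    by (intro exI[of _ h] exI[of _ "\<lambda>z. cnj lam * g z"] conjI h g' e1[symmetric] allI impI e2)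
qed


theorem theorem2p2:
  fixes G :: "(complex \<Rightarrow> complex) set"
  assumes "G \<subseteq> class_S"
  shows "harmonic_analogue G \<subseteq> class_SSH0
    \<and> (\<forall>f. f \<in> class_S \<and> f \<in> harmonic_analogue G \<longrightarrow> f \<in> G)
    \<and> (\<forall>h g lam. h holomorphic_on unit_disk \<and> g holomorphic_on unit_disk \<and> h 0 = 0 \<and> g 0 = 0 \<and>
           harm h g \<in> harmonic_analogue G \<and> norm lam = 1 \<longrightarrow>
           on_disk (\<lambda>z. h z + lam * cnj (g z)) \<in> harmonic_analogue G)
    \<and> (\<forall>J. J \<subseteq> G \<longrightarrow> harmonic_analogue J \<subseteq> harmonic_analogue G)"
proof (intro conjI allI impI subsetI)
  fix f assume "f \<in> harmonic_analogue G"
  then show "f \<in> class_SSH0" by (rule part1[OF assms])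
next
  fix f assume "f \<in> class_S \<and> f \<in> harmonic_analogue G"
  then show "f \<in> G" using part2[OF assms] by blast
next
  fix h g :: "complex \<Rightarrow> complex" and lam :: complex assume a: "h holomorphic_on unit_disk \<and> g holomorphic_on unit_disk \<and> h 0 = 0 \<and> g 0 = 0 \<and>
           harm h g \<in> harmonic_analogue G \<and> norm lam = 1"
  then show "on_disk (\<lambda>z. h z + lam * cnj (g z)) \<in> harmonic_analogue G"
    using part3[OF assms] by blast
next
  fix J f assume "J \<subseteq> G" "f \<in> harmonic_analogue J"
  then show "f \<in> harmonic_analogue G" unfolding harmonic_analogue_def by blast
qed

end
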